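(* Let $\mathcal{X}$ be a connected $n$-premaniplex and let $(\mathcal{Y},\eta)$ be an $(n,m)$-voltage operator that preserves connectivity. Let $\gamma\in\operatorname{Aut}(\mathcal{X}\rtimes_\eta\mathcal{Y})$. If there exist a flag $(x_0,y_0)$ and a flag $x_1\in\mathcal{X}$ with $(x_0,y_0)\gamma=(x_1,y_0)$, then there is $\alpha\in\operatorname{Aut}(\mathcal{X})$ such that $(x,y)\gamma=(x\alpha,y)$ for all flags $(x,y)$ of $\mathcal{X}\rtimes_\eta\mathcal{Y}$.
   Context: An $n$-premaniplex is an edge-coloured graph (semi-edges and parallel edges allowed) with colours $\{0,\dots,n-1\}$ such that every vertex (flag) is the start of exactly one dart of each colour, and for $|i-j|\ge2$ alternating $i,j$-paths of length 4 are closed; $x^i$ is the $i$-adjacent flag of $x$. $\mathcal{C}^n=\langle r_0,\dots,r_{n-1}\mid r_i^2,\ (r_ir_j)^2\ (|i-j|\ge2)\rangle$ acts on flags by $r_ix=x^i$. Automorphisms (colour-preserving graph automorphisms) act on the right and commute with this action. For a flag $y$ of an $m$-premaniplex $\mathcal{Y}$ and $\omega\in\mathcal{C}^m$, $W_\omega(y)$ is the homotopy class of paths from $y$ whose colour sequence $i_1,\dots,i_k$ satisfies $r_{i_k}\cdots r_{i_1}=\omega$; these form the fundamental groupoid $\Pi(\mathcal{Y})$. A voltage assignment $\eta:\Pi(\mathcal{Y})\to\mathcal{C}^n$ satisfies $\eta(W_1W_2)=\eta(W_2)\eta(W_1)$; $(\mathcal{Y},\eta)$ is an $(n,m)$-voltage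 operator. $\mathcal{X}\rtimes_\eta\mathcal{Y}$ has flags $\mathcal{X}\times\mathcal{Y}$ and $(x,y)^i=(\eta(W_{r_i}(y))x,r_iy)$, $i\in\{0,\dots,m-1\}$; hence $\omega(x,y)=(\eta(W_\omega(y))x,\omega y)$. The operator preserves connectivity if $\mathcal{X}\rtimes_\eta\mathcal{Y}$ is connected whenever $\mathcal{X}$ is. Standing convention: $\mathcal{Y}$ has a spanning tree all of whose darts have trivial voltage. *)

theory Defs
  imports Main
begin

text \<open>Flags of a premaniplex: a carrier set F together with the adjacency
  function adj, where adj i x is the i-adjacent flag x^i (semi-edges: adj i x = x).\<close>

definition premaniplex :: "nat \<Rightarrow> 'f set \<Rightarrow> (nat \<Rightarrow> 'f \<Rightarrow> 'f) \<Rightarrow> bool" where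
  "premaniplex n F adj \<longleftrightarrow>
     (\<forall>i<n. \<forall>x\<in>F. adj i x \<in> F \<and> adj i (adj i x) = x) \<and>
     (\<forall>i<n. \<forall>j<n. \<forall>x\<in>F. (i + 2 \<le> j \<or> j + 2 \<le> i) \<longrightarrow> adj i (adj j x) = adj j (adj i x))"

text \<open>A word [i1,...,ik] (the colour sequence of a path) represents r_ik ... r_i1;
  it acts by applying i1 first.\<close>

definition act :: "(nat \<Rightarrow> 'f \<Rightarrow> 'f) \<Rightarrow> nat list \<Rightarrow> 'f \<Rightarrow> 'f" where
  "act adj w x = fold (\<lambda>i z. adj i z) w x"

inductive cox_step :: "nat list \<Rightarrow> nat list \<Rightarrow> bool" where
  del: "cox_step (u @ [i, i] @ v) (u @ v)"
| swap: "i + 2 \<le> j \<or> j + 2 \<le> i \<Longrightarrow> cox_step (u @ [i, j] @ v) (u @ [j, i] @ v)"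

text \<open>Equality in the group C^n = <r_i | r_i^2, (r_i r_j)^2 (|i-j|>=2)> of the
  elements represented by two words (equivalence closure of the rewriting steps).\<close>

definition cox_eq :: "nat list \<Rightarrow> nat list \<Rightarrow> bool" where
  "cox_eq = (sup cox_step cox_step\<inverse>\<inverse>)\<^sup>*\<^sup>*"

definition connected_pm :: "nat \<Rightarrow> 'f set \<Rightarrow> (nat \<Rightarrow> 'f \<Rightarrow> 'f) \<Rightarrow> bool" where
  "connected_pm n F adj \<longleftrightarrow>
     (\<forall>a\<in>F. \<forall>b\<in>F. \<exists>w. set w \<subseteq> {..<n} \<and> act adj w a = b)"

definition is_aut :: "nat \<Rightarrow> 'f set \<Rightarrow> (nat \<Rightarrow> 'f \<Rightarrow> 'f) \<Rightarrow> ('f \<Rightarrow> 'f) \<Rightarrow> bool" where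
  "is_aut n F adj g \<longleftrightarrow> bij_betw g F F \<and> (\<forall>i<n. \<forall>x\<in>F. g (adj i x) = adj i (g x))"

text \<open>Voltage assignment: eta y w is (a word representing) the voltage of the
  homotopy class W_omega(y), where w is any word over {0..m-1} representing omega.\<close>

definition voltage_operator ::
  "nat \<Rightarrow> nat \<Rightarrow> 'y set \<Rightarrow> (nat \<Rightarrow> 'y \<Rightarrow> 'y) \<Rightarrow> ('y \<Rightarrow> nat list \<Rightarrow> nat list) \<Rightarrow> bool" where
  "voltage_operator n m FY adjY eta \<longleftrightarrow>
     premaniplex m FY adjY \<and>
     (\<forall>y\<in>FY. \<forall>w. set w \<subseteq> {..<m} \<longrightarrow> set (eta y w) \<subseteq> {..<n}) \<and>
     (\<forall>y\<in>FY. \<forall>w w'. set w \<subseteq> {..<m} \<longrightarrow> set w' \<subseteq> {..<m} \<longrightarrow> cox_eq w w'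
         \<longrightarrow> cox_eq (eta y w) (eta y w')) \<and>
     (\<forall>y\<in>FY. \<forall>w1 w2. set w1 \<subseteq> {..<m} \<longrightarrow> set w2 \<subseteq> {..<m} \<longrightarrow>
         cox_eq (eta y (w1 @ w2)) (eta y w1 @ eta (act adjY w1 y) w2))"

fun walk_in :: "('y \<times> nat) set \<Rightarrow> (nat \<Rightarrow> 'y \<Rightarrow> 'y) \<Rightarrow> 'y \<Rightarrow> nat list \<Rightarrow> bool" where
  "walk_in T adj y [] = True"
| "walk_in T adj y (i # w) = ((y, i) \<in> T \<and> walk_in T adj (adj i y) w)"

definition reduced_word :: "nat list \<Rightarrow> bool" where
  "reduced_word w \<longleftrightarrow> (\<forall>k. Suc k < length w \<longrightarrow> w ! k \<noteq> w ! Suc k)"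

text \<open>Standing convention: a spanning tree (set of darts T, closed under reversal,
  without semi-edges, connected, with no closed non-backtracking walk) all of
  whose darts have trivial voltage.\<close>

definition trivial_spanning_tree ::
  "nat \<Rightarrow> 'y set \<Rightarrow> (nat \<Rightarrow> 'y \<Rightarrow> 'y) \<Rightarrow> ('y \<Rightarrow> nat list \<Rightarrow> nat list) \<Rightarrow> bool" where
  "trivial_spanning_tree m FY adjY eta \<longleftrightarrow>
     (\<exists>T. T \<subseteq> {(y, i). y \<in> FY \<and> i < m} \<and>
        (\<forall>(y, i)\<in>T. (adjY i y, i) \<in> T \<and> adjY i y \<noteq> y \<and> cox_eq (eta y [i]) []) \<and>
        (\<forall>y\<in>FY. \<forall>y'\<in>FY. \<exists>w. walk_in T adjY y w \<and> act adjY w y = y') \<and>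
        (\<forall>y\<in>FY. \<forall>w. w \<noteq> [] \<and> reduced_word w \<and> walk_in T adjY y w \<longrightarrow> act adjY w y \<noteq> y))"

definition vprod_adj ::
  "(nat \<Rightarrow> 'x \<Rightarrow> 'x) \<Rightarrow> (nat \<Rightarrow> 'y \<Rightarrow> 'y) \<Rightarrow> ('y \<Rightarrow> nat list \<Rightarrow> nat list)
    \<Rightarrow> nat \<Rightarrow> 'x \<times> 'y \<Rightarrow> 'x \<times> 'y" where
  "vprod_adj adjX adjY eta i p = (act adjX (eta (snd p) [i]) (fst p), adjY i (snd p))"

text \<open>Preservation of connectivity. Connected premaniplexes are countable, so it
  suffices to quantify over premaniplexes whose flags are natural numbers.\<close>

definition preserves_connectivity ::
  "nat \<Rightarrow> nat \<Rightarrow> 'y set \<Rightarrow> (nat \<Rightarrow> 'y \<Rightarrow> 'y) \<Rightarrow> ('y \<Rightarrow> nat list \<Rightarrow> nat list) \<Rightarrow> bool" where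
  "preserves_connectivity n m FY adjY eta \<longleftrightarrow>
     (\<forall>(F :: nat set) adj. premaniplex n F adj \<and> connected_pm n F adj
        \<longrightarrow> connected_pm m (F \<times> FY) (vprod_adj adj adjY eta))"

end

theory Submission
  imports Defs "HOL-Library.Countable_Set"
begin

lemma act_Nil[simp]: "act adj [] x = x" by (simp add: act_def)
lemma act_Cons[simp]: "act adj (i # w) x = act adj w (adj i x)" by (simp add: act_def)
lemma act_append[simp]: "act adj (u @ v) x = act adj v (act adj u x)" by (simp add: act_def)

lemma pm_closed: "premaniplex n F adj \<Longrightarrow> i < n \<Longrightarrow> x \<in> F \<Longrightarrow> adj i x \<in> F"
  by (simp add: premaniplex_def)
lemma pm_inv: "premaniplex n F adj \<Longrightarrow> i < n \<Longrightarrow> x \<in> F \<Longrightarrow> adj i (adj i x) = x"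
  by (simp add: premaniplex_def)
lemma pm_comm: "premaniplex n F adj \<Longrightarrow> i < n \<Longrightarrow> j < n \<Longrightarrow> x \<in> F \<Longrightarrow> i + 2 \<le> j \<or> j + 2 \<le> i
   \<Longrightarrow> adj i (adj j x) = adj j (adj i x)"
  unfolding premaniplex_def by blast

lemma act_closed: "premaniplex n F adj \<Longrightarrow> set w \<subseteq> {..<n} \<Longrightarrow> x \<in> F \<Longrightarrow> act adj w x \<in> F"
  by (induction w arbitrary: x) (auto intro: pm_closed)

lemma act_rev: "premaniplex n F adj \<Longrightarrow> set w \<subseteq> {..<n} \<Longrightarrow> x \<in> F \<Longrightarrow> act adj (rev w) (act adj w x) = x"
  by (induction w arbitrary: x) (auto simp: pm_closed pm_inv)

lemma step_filter:
  assumes pm: "premaniplex n F adj" and st: "cox_step u v" and x: "x \<in> F"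
  shows "act adj (filter (\<lambda>i. i < n) u) x = act adj (filter (\<lambda>i. i < n) v) x"
  using st
proof cases
  case (del u' i v')
  have c: "act adj (filter (\<lambda>i. i < n) u') x \<in> F" by (rule act_closed[OF pm _ x]) auto
  show ?thesis using del pm_inv[OF pm _ c] by auto
next
  case (swap i j u' v')
  have c: "act adj (filter (\<lambda>i. i < n) u') x \<in> F" by (rule act_closed[OF pm _ x]) auto
  show ?thesis using swap pm_comm[OF pm _ _ c] by auto
qed

lemma cox_eq_filter:
  assumes pm: "premaniplex n F adj" and ce: "cox_eq u v" and x: "x \<in> F"
  shows "act adj (filter (\<lambda>i. i < n) u) x = act adj (filter (\<lambda>i. i < n) v) x"
  using ce[unfolded cox_eq_def]
proof (induction rule: rtranclp_induct)
  case base then show ?case by simp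
next
  case (step y z)
  then show ?case using step_filter[OF pm _ x] by auto
qed

lemma cox_eq_triv:
  assumes pm: "premaniplex n F adj" and ce: "cox_eq w []" and "set w \<subseteq> {..<n}" and x: "x \<in> F"
  shows "act adj w x = x"
proof -
  have "filter (\<lambda>i. i < n) w = w" using assms(3) by (auto intro: filter_True)
  then show ?thesis using cox_eq_filter[OF pm ce x] by simp
qed

fun V :: "(nat \<Rightarrow> 'y \<Rightarrow> 'y) \<Rightarrow> ('y \<Rightarrow> nat list \<Rightarrow> nat list) \<Rightarrow> 'y \<Rightarrow> nat list \<Rightarrow> nat list" where
  "V adjY eta y [] = []"
| "V adjY eta y (i # u) = eta y [i] @ V adjY eta (adjY i y) u"

lemma actP: "act (vprod_adj A adjY eta) u (x, y) = (act A (V adjY eta y u) x, act adjY u y)"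
  by (induction u arbitrary: x y) (auto simp: vprod_adj_def)

definition diag :: "(nat \<Rightarrow> 'x \<Rightarrow> 'x) \<Rightarrow> nat \<Rightarrow> 'x \<times> 'x \<Rightarrow> 'x \<times> 'x" where
  "diag adj i p = (adj i (fst p), adj i (snd p))"

lemma act_diag: "act (diag adj) v (a, b) = (act adj v a, act adj v b)"
  by (induction v arbitrary: a b) (auto simp: diag_def)

lemma diag_pm: "premaniplex n F adj \<Longrightarrow> premaniplex n (F \<times> F) (diag adj)"
  unfolding premaniplex_def diag_def by auto

lemma component_pm:
  assumes pm: "premaniplex n F adj" and p0: "p0 \<in> F"
  defines "S \<equiv> (\<lambda>v. act adj v p0) ` {v. set v \<subseteq> {..<n}}"
  shows "premaniplex n S adj \<and> connected_pm n S adj \<and> S \<subseteq> F"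
proof -
  have SF: "S \<subseteq> F" unfolding S_def using act_closed[OF pm _ p0] by auto
  have cl: "adj i s \<in> S" if "i < n" "s \<in> S" for i s
  proof -
    obtain v where v: "set v \<subseteq> {..<n}" "s = act adj v p0" using \<open>s \<in> S\<close> unfolding S_def by auto
    then have "adj i s = act adj (v @ [i]) p0" by simp
    then show ?thesis unfolding S_def using v \<open>i < n\<close> by (intro image_eqI[of _ _ "v @ [i]"]) auto
  qed
  have "premaniplex n S adj" unfolding premaniplex_def
    using cl SF pm by (auto simp: premaniplex_def subset_iff)
  moreover have "connected_pm n S adj" unfolding connected_pm_def
  proof (intro ballI)
    fix a b assume "a \<in> S" "b \<in> S"
    then obtain v v' where "set v \<subseteq> {..<n}" "a = act adj v p0" "set v' \<subseteq> {..<n}" "b = act adj v' p0"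
      unfolding S_def by auto
    then show "\<exists>w. set w \<subseteq> {..<n} \<and> act adj w a = b"
      by (intro exI[of _ "rev v @ v'"]) (auto simp: act_rev[OF pm _ p0])
  qed
  ultimately show ?thesis using SF by blast
qed

lemma pc_transfer:
  assumes pc: "preserves_connectivity n m FY adjY eta"
    and pm: "premaniplex n S adjS" and con: "connected_pm n S adjS"
    and etan: "\<forall>y\<in>FY. \<forall>i<m. set (eta y [i]) \<subseteq> {..<n}"
    and pmY: "premaniplex m FY adjY"
  shows "connected_pm m (S \<times> FY) (vprod_adj adjS adjY eta)"
proof (cases "S = {}")
  case True then show ?thesis by (simp add: connected_pm_def)
next
  case False
  then obtain s0 where s0: "s0 \<in> S" by auto
  have "S = (\<lambda>w. act adjS w s0) ` lists {..<n}"
    proof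
    show "S \<subseteq> (\<lambda>w. act adjS w s0) ` lists {..<n}"
      using con s0 unfolding connected_pm_def by (force simp: image_iff lists_eq_set)
    show "(\<lambda>w. act adjS w s0) ` lists {..<n} \<subseteq> S"
      using act_closed[OF pm _ s0] by (auto simp: lists_eq_set)
  qed
  then have cS: "countable S" by (metis countable_image countable_lists countable_finite finite_lessThan)
  define f where "f = to_nat_on S"
  define g where "g = from_nat_into S"
  have gf: "g (f s) = s" if "s \<in> S" for s using cS that by (simp add: f_def g_def)
  define F where "F = f ` S"
  define adj where "adj i k = f (adjS i (g k))" for i k
  have adjf: "adj i (f s) = f (adjS i s)" if "s \<in> S" for i s using gf that by (simp add: adj_def)
  have actf: "act adj w (f s) = f (act adjS w s)" if "s \<in> S" "set w \<subseteq> {..<n}" for w s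
    using that by (induction w arbitrary: s) (auto simp: adjf pm_closed[OF pm])
  have pmF: "premaniplex n F adj" unfolding premaniplex_def F_def
    using pm by (auto simp: adjf pm_closed[OF pm] pm_inv[OF pm] pm_comm[OF pm])
  have conF: "connected_pm n F adj" unfolding connected_pm_def F_def
  proof (intro ballI)
    fix a b assume "a \<in> f ` S" "b \<in> f ` S"
    then obtain s t where st: "s \<in> S" "t \<in> S" "a = f s" "b = f t" by auto
    then obtain w where "set w \<subseteq> {..<n}" "act adjS w s = t" using con st(1,2) unfolding connected_pm_def by blast
    then show "\<exists>w. set w \<subseteq> {..<n} \<and> act adj w a = b" using st actf by auto
  qed
  have conP: "connected_pm m (F \<times> FY) (vprod_adj adj adjY eta)"
    using pc pmF conF unfolding preserves_connectivity_def by blast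
  have V_sub: "set (V adjY eta y u) \<subseteq> {..<n}" if "y \<in> FY" "set u \<subseteq> {..<m}" for y u
    using that
  proof (induction u arbitrary: y)
    case (Cons i u)
    then have "i < m" "adjY i y \<in> FY" using pm_closed[OF pmY] by auto
    then show ?case using Cons etan by auto
  qed simp
  show ?thesis unfolding connected_pm_def
  proof (intro ballI)
    fix p q assume "p \<in> S \<times> FY" "q \<in> S \<times> FY"
    then obtain s y t y' where st: "s \<in> S" "y \<in> FY" "t \<in> S" "y' \<in> FY" "p = (s, y)" "q = (t, y')" by auto
    then obtain u where u: "set u \<subseteq> {..<m}" "act (vprod_adj adj adjY eta) u (f s, y) = (f t, y')"
      using conP unfolding connected_pm_def F_def by force
    then have "f (act adjS (V adjY eta y u) s) = f t" "act adjY u y = y'"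
      using actP actf st V_sub by (auto simp: actP actf)
    then have "act adjS (V adjY eta y u) s = t"
      by (metis gf st(1,3) act_closed[OF pm V_sub[OF st(2) u(1)]])
    then show "\<exists>w. set w \<subseteq> {..<m} \<and> act (vprod_adj adjS adjY eta) w p = q"
      using u st \<open>act adjY u y = y'\<close> by (auto simp: actP)
  qed
qed

theorem proposition4p2:
  fixes n m :: nat
    and FX :: "'x set" and adjX :: "nat \<Rightarrow> 'x \<Rightarrow> 'x"
    and FY :: "'y set" and adjY :: "nat \<Rightarrow> 'y \<Rightarrow> 'y"
    and eta :: "'y \<Rightarrow> nat list \<Rightarrow> nat list"
    and \<gamma> :: "'x \<times> 'y \<Rightarrow> 'x \<times> 'y"
  assumes "premaniplex n FX adjX" and "connected_pm n FX adjX"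
    and "voltage_operator n m FY adjY eta"
    and "trivial_spanning_tree m FY adjY eta"
    and "preserves_connectivity n m FY adjY eta"
    and "is_aut m (FX \<times> FY) (vprod_adj adjX adjY eta) \<gamma>"
    and "x0 \<in> FX" and "y0 \<in> FY" and "x1 \<in> FX"
    and "\<gamma> (x0, y0) = (x1, y0)"
  shows "\<exists>\<alpha>. is_aut n FX adjX \<alpha> \<and> (\<forall>x\<in>FX. \<forall>y\<in>FY. \<gamma> (x, y) = (\<alpha> x, y))"
proof -
  note pmX = assms(1) and conX = assms(2) and pc = assms(5)
  have pmY: "premaniplex m FY adjY" using assms(3) by (simp add: voltage_operator_def)
  have etan: "\<forall>y\<in>FY. \<forall>i<m. set (eta y [i]) \<subseteq> {..<n}" using assms(3) by (simp add: voltage_operator_def)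
  obtain T where T: "T \<subseteq> {(y, i). y \<in> FY \<and> i < m}"
    "\<forall>(y, i)\<in>T. (adjY i y, i) \<in> T \<and> adjY i y \<noteq> y \<and> cox_eq (eta y [i]) []"
    "\<forall>y\<in>FY. \<forall>y'\<in>FY. \<exists>w. walk_in T adjY y w \<and> act adjY w y = y'"
    using assms(4) unfolding trivial_spanning_tree_def by (elim exE conjE) (rule that; assumption)
  define P where "P = vprod_adj adjX adjY eta"
  have bij: "bij_betw \<gamma> (FX \<times> FY) (FX \<times> FY)"
    using assms(6) unfolding is_aut_def by (rule conjunct1)
  have gc: "\<forall>i<m. \<forall>p\<in>FX \<times> FY. \<gamma> (P i p) = P i (\<gamma> p)"
    using assms(6) unfolding is_aut_def P_def by (rule conjunct2)
  have gmap: "\<gamma> p \<in> FX \<times> FY" if "p \<in> FX \<times> FY" for p by (rule bij_betw_apply[OF bij that])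
  have V_sub: "set (V adjY eta y u) \<subseteq> {..<n}" if "y \<in> FY" "set u \<subseteq> {..<m}" for y u
    using that
  proof (induction u arbitrary: y)
    case (Cons i u)
    then have "i < m" "adjY i y \<in> FY" using pm_closed[OF pmY] by auto
    then show ?case using Cons etan by auto
  qed simp
  have Pcl: "act P u p \<in> FX \<times> FY" if pu: "p \<in> FX \<times> FY" "set u \<subseteq> {..<m}" for p u
  proof -
    obtain x y where "p = (x, y)" "x \<in> FX" "y \<in> FY" using pu(1) by (cases p) auto
    then show ?thesis using act_closed[OF pmX V_sub] act_closed[OF pmY] pu
      by (auto simp: P_def actP)
  qed
  have gact: "\<gamma> (act P u p) = act P u (\<gamma> p)" if "p \<in> FX \<times> FY" "set u \<subseteq> {..<m}" for p u
    using that
  proof (induction u arbitrary: p)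
    case (Cons i u)
    have "P i p \<in> FX \<times> FY" using Pcl[of p "[i]"] Cons by auto
    moreover have "i < m" "set u \<subseteq> {..<m}" using Cons.prems by auto
    moreover have "\<gamma> (P i p) = P i (\<gamma> p)" using gc \<open>i < m\<close> Cons.prems(1) by blast
    moreover have "\<gamma> p \<in> FX \<times> FY" using gmap Cons.prems(1) by blast
    ultimately show ?case using Cons.IH by simp
  qed simp
  have K: "\<exists>u. set u \<subseteq> {..<m} \<and> act adjY u y0 = y0 \<and> act adjX (V adjY eta y0 u) a = c
            \<and> act adjX (V adjY eta y0 u) b = d"
    if "a \<in> FX" "b \<in> FX" "set v \<subseteq> {..<n}" "act adjX v a = c" "act adjX v b = d" for a b c d v
  proof -
    define S where "S = (\<lambda>v. act (diag adjX) v (a, b)) ` {v. set v \<subseteq> {..<n}}"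
    have "premaniplex n S (diag adjX) \<and> connected_pm n S (diag adjX)"
      using component_pm[OF diag_pm[OF pmX], of "(a, b)"] that unfolding S_def by auto
    then have "connected_pm m (S \<times> FY) (vprod_adj (diag adjX) adjY eta)"
      using pc_transfer[OF pc _ _ etan pmY] by auto
    moreover have "(a, b) \<in> S" unfolding S_def by (rule image_eqI[of _ _ "[]"]) auto
    moreover have "(c, d) \<in> S" unfolding S_def using that by (intro image_eqI[of _ _ v]) (auto simp: act_diag)
    ultimately obtain u where "set u \<subseteq> {..<m}"
      "act (vprod_adj (diag adjX) adjY eta) u ((a, b), y0) = ((c, d), y0)"
      unfolding connected_pm_def using assms(8) by blast
    then show ?thesis by (auto simp: actP act_diag)
  qed
  have walk: "set w \<subseteq> {..<m} \<and> act adjX (V adjY eta y w) x = x"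
    if "walk_in T adjY y w" "y \<in> FY" "x \<in> FX" for w y x
    using that(1,2)
  proof (induction w arbitrary: y)
    case (Cons i w)
    have yi: "(y, i) \<in> T" "walk_in T adjY (adjY i y) w" using Cons.prems(1) by simp_all
    have im: "i < m" using T(1) yi(1) by blast
    have "cox_eq (eta y [i]) []" using bspec[OF T(2) yi(1)] by simp
    moreover have "set (eta y [i]) \<subseteq> {..<n}" using etan Cons.prems(2) im by blast
    ultimately have e: "act adjX (eta y [i]) x = x"
      using cox_eq_triv[OF pmX _ _ that(3)] by blast
    have "adjY i y \<in> FY" using pm_closed[OF pmY im Cons.prems(2)] .
    then have "set w \<subseteq> {..<m} \<and> act adjX (V adjY eta (adjY i y) w) x = x" using Cons.IH[OF yi(2)] by blast
    then show ?case using e im by simp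
  qed simp
  define \<alpha> where "\<alpha> x = fst (\<gamma> (x, y0))" for x
  have st1: "\<gamma> (x, y0) = (\<alpha> x, y0) \<and> \<alpha> x \<in> FX" if xF: "x \<in> FX" for x
  proof -
    obtain v where v: "set v \<subseteq> {..<n}" "act adjX v x0 = x" using conX assms(7) xF
      unfolding connected_pm_def by blast
    obtain u where u: "set u \<subseteq> {..<m}" "act adjY u y0 = y0" "act adjX (V adjY eta y0 u) x0 = x"
      using K[OF assms(7) assms(7) v(1) v(2) v(2)] by blast
    have "(x, y0) = act P u (x0, y0)" using u by (simp add: P_def actP)
    then have "\<gamma> (x, y0) = act P u (x1, y0)" using gact[OF _ u(1), of "(x0, y0)"] assms(7,8,10) by simp
    then have "snd (\<gamma> (x, y0)) = y0" using u by (simp add: P_def actP)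
    moreover have "\<gamma> (x, y0) \<in> FX \<times> FY" using gmap that assms(8) by auto
    ultimately show ?thesis unfolding \<alpha>_def by (metis mem_Times_iff prod.collapse)
  qed
  have st2: "\<gamma> (x, y) = (\<alpha> x, y)" if "x \<in> FX" "y \<in> FY" for x y
  proof -
    obtain w where w: "walk_in T adjY y0 w" "act adjY w y0 = y" using T(3) assms(8) \<open>y \<in> FY\<close> by blast
    have wm: "set w \<subseteq> {..<m}" using walk[OF w(1) assms(8) that(1)] by blast
    have "(x, y) = act P w (x, y0)" using walk[OF w(1) assms(8) that(1)] w by (simp add: P_def actP)
    then have "\<gamma> (x, y) = act P w (\<alpha> x, y0)" using gact[OF _ wm, of "(x, y0)"] st1 that assms(8) by simp
    also have "\<dots> = (\<alpha> x, y)" using walk[OF w(1) assms(8)] st1 that w by (simp add: P_def actP)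
    finally show ?thesis .
  qed
  have inj: "inj_on \<alpha> FX"
  proof (rule inj_onI)
    fix x x' assume "x \<in> FX" "x' \<in> FX" "\<alpha> x = \<alpha> x'"
    then have "\<gamma> (x, y0) = \<gamma> (x', y0)" using st1 by simp
    then show "x = x'" using bij_betw_imp_inj_on[OF bij] \<open>x \<in> FX\<close> \<open>x' \<in> FX\<close> assms(8)
      by (auto dest: inj_onD)
  qed
  have surj: "\<alpha> ` FX = FX"
  proof
    show "\<alpha> ` FX \<subseteq> FX" using st1 by auto
    show "FX \<subseteq> \<alpha> ` FX"
    proof
      fix z assume "z \<in> FX"
      then have "(z, y0) \<in> \<gamma> ` (FX \<times> FY)" using bij_betw_imp_surj_on[OF bij] assms(8) by auto
      then obtain x y where "x \<in> FX" "y \<in> FY" "\<gamma> (x, y) = (z, y0)" by auto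
      then show "z \<in> \<alpha> ` FX" using st2 by auto
    qed
  qed
  have comm: "\<alpha> (adjX i x) = adjX i (\<alpha> x)" if ix: "i < n" "x \<in> FX" for i x
  proof -
    have ax: "\<alpha> x \<in> FX" using st1 that by auto
    obtain u where u: "set u \<subseteq> {..<m}" "act adjY u y0 = y0"
      "act adjX (V adjY eta y0 u) x = adjX i x" "act adjX (V adjY eta y0 u) (\<alpha> x) = adjX i (\<alpha> x)"
      using K[OF ix(2) ax, where v="[i]" and c="adjX i x" and d="adjX i (\<alpha> x)"] ix by auto
    have "act P u (x, y0) = (adjX i x, y0)" using u by (simp add: P_def actP)
    then have "\<gamma> (adjX i x, y0) = act P u (\<gamma> (x, y0))" using gact[OF _ u(1), of "(x, y0)"] that assms(8) by simp
    also have "\<dots> = (adjX i (\<alpha> x), y0)" using st1[OF that(2)] u by (simp add: P_def actP)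
    finally show ?thesis using st1[OF pm_closed[OF pmX that]] by simp
  qed
  have "is_aut n FX adjX \<alpha>" unfolding is_aut_def bij_betw_def using inj surj comm by auto
  then show ?thesis using st2 by blast
qed

end
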